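(* Let $R$ be a finite set of terminals, let $T$ be a spanning tree on vertex set $R$ (possibly with parallel edges in its ambient multigraph) with nonnegative edge costs $c$, and let $x$ be any feasible solution of the constraint system \[ \sum_{K:\,K\cap S\neq\varnothing} x_K(|K\cap S|-1)\le |S|-1\ \ \forall\, \varnothing\neq S\subseteq R,\qquad \sum_K x_K(|K|-1)=|R|-1,\qquad x_K\ge 0, \] where $K$ ranges over subsets of $R$ with $|K|\ge2$. Then \[ \sum_K x_K\,\mathrm{drop}_T(K)\ \ge\ c(T). \]
   Context: For $K\subseteq R$, $T/K$ denotes the multigraph obtained from $T$ by identifying all terminals of $K$ into a single vertex (edges keep their costs; loops may be discarded). $\mathrm{Drop}_T(K)=E(T)\setminus E(\mathrm{MST}(T/K))$ is the set of edges of $T$ not contained in a chosen minimum spanning tree of $T/K$, and $\mathrm{drop}_T(K)$ is its total cost, i.e. $\mathrm{drop}_T(K)=c(T)-\mathrm{mst}(T/K)$, where $\mathrm{mst}$ denotes the cost of a minimum spanning tree. $c(T)$ is the total cost of the edges of $T$. *)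

theory Defs
  imports Complex_Main
begin

text \<open>A multigraph on vertex set R is given by an edge index set E and an endpoint map
  ends :: 'e => 'a * 'a.  Contracting a terminal set K identifies all vertices of K;
  connectivity in the multigraph (V, F) after contraction by K is the reflexive transitive
  closure of the (symmetric) edge relation of F together with K x K.\<close>

definition edge_rel :: "('e \<Rightarrow> 'a \<times> 'a) \<Rightarrow> 'e set \<Rightarrow> ('a \<times> 'a) set" where
  "edge_rel ends F = {(u, v). \<exists>e\<in>F. ends e = (u, v) \<or> ends e = (v, u)}"

definition conn :: "('e \<Rightarrow> 'a \<times> 'a) \<Rightarrow> 'a set \<Rightarrow> 'e set \<Rightarrow> ('a \<times> 'a) set" where
  "conn ends K F = (edge_rel ends F \<union> K \<times> K)\<^sup>*"

text \<open>F is (the edge set of) a spanning tree of the multigraph (R, E)/K: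
  F is a subset of E, connects all vertices of the contracted graph, and is acyclic
  (no edge of F lies on a cycle: its endpoints are not connected without it; in particular
  no loop of the contracted graph belongs to F).\<close>

definition is_spanning_tree_contr ::
    "'a set \<Rightarrow> ('e \<Rightarrow> 'a \<times> 'a) \<Rightarrow> 'e set \<Rightarrow> 'a set \<Rightarrow> 'e set \<Rightarrow> bool" where
  "is_spanning_tree_contr R ends E K F \<longleftrightarrow>
     F \<subseteq> E \<and>
     (\<forall>u\<in>R. \<forall>v\<in>R. (u, v) \<in> conn ends K F) \<and>
     (\<forall>e\<in>F. ends e \<notin> conn ends K (F - {e}))"

definition mst_contr ::
    "'a set \<Rightarrow> ('e \<Rightarrow> 'a \<times> 'a) \<Rightarrow> 'e set \<Rightarrow> ('e \<Rightarrow> real) \<Rightarrow> 'a set \<Rightarrow> real" where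
  "mst_contr R ends E c K = Min {sum c F | F. is_spanning_tree_contr R ends E K F}"

definition drop_T ::
    "'a set \<Rightarrow> ('e \<Rightarrow> 'a \<times> 'a) \<Rightarrow> 'e set \<Rightarrow> ('e \<Rightarrow> real) \<Rightarrow> 'a set \<Rightarrow> real" where
  "drop_T R ends E c K = sum c E - mst_contr R ends E c K"

definition hyperedges :: "'a set \<Rightarrow> 'a set set" where
  "hyperedges R = {K. K \<subseteq> R \<and> 2 \<le> card K}"

end

theory Submission
  imports Defs
begin

definition cls :: "'a set \<Rightarrow> ('a \<times> 'a) set \<Rightarrow> 'a set set" where
  "cls R Q = (\<lambda>v. Q\<^sup>* `` {v}) ` R"

definition ncl :: "'a set \<Rightarrow> ('a \<times> 'a) set \<Rightarrow> nat" where
  "ncl R Q = card (cls R Q)"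

lemma rt_sym: "sym Q \<Longrightarrow> (u, v) \<in> Q\<^sup>* \<Longrightarrow> (v, u) \<in> Q\<^sup>*"
  using sym_rtrancl by (metis symD)

lemma rt_class_eq: "sym Q \<Longrightarrow> (u, v) \<in> Q\<^sup>* \<Longrightarrow> Q\<^sup>* `` {u} = Q\<^sup>* `` {v}"
  using rt_sym by (fastforce intro: rtrancl_trans)

lemma rt_in: assumes "Q \<subseteq> R \<times> R" "v \<in> R" "(v, y) \<in> Q\<^sup>*" shows "y \<in> R"
  using assms(3) by (induction rule: rtrancl_induct) (use assms in auto)

lemma fin_cls: "finite R \<Longrightarrow> finite (cls R Q)"
  unfolding cls_def by simp

lemma rt_add_edge:
  assumes "sym Q" and "(v, y) \<in> (Q \<union> {(u,w),(w,u)})\<^sup>*"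
  shows "(v, y) \<in> Q\<^sup>* \<or> ((v, u) \<in> Q\<^sup>* \<and> (w, y) \<in> Q\<^sup>*) \<or> ((v, w) \<in> Q\<^sup>* \<and> (u, y) \<in> Q\<^sup>*)"
  using assms(2)
proof (induction rule: rtrancl_induct)
  case base then show ?case by simp
next
  case (step y z)
  from step.hyps(2) have "(y,z) \<in> Q \<or> (y,z) = (u,w) \<or> (y,z) = (w,u)" by auto
  then show ?case
  proof (elim disjE)
    assume "(y,z) \<in> Q"
    then show ?case using step.IH by (meson rtrancl.rtrancl_into_rtrancl)
  next
    assume a: "(y,z) = (u,w)"
    show ?case using step.IH
    proof (elim disjE conjE)
      assume "(v,y) \<in> Q\<^sup>*" then show ?case using a by auto
    next
      assume "(v,u) \<in> Q\<^sup>*" "(w,y) \<in> Q\<^sup>*" then show ?case using a by auto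
    next
      assume "(v,w) \<in> Q\<^sup>*" "(u,y) \<in> Q\<^sup>*" then show ?case using a by auto
    qed
  next
    assume a: "(y,z) = (w,u)"
    show ?case using step.IH
    proof (elim disjE conjE)
      assume "(v,y) \<in> Q\<^sup>*" then show ?case using a by auto
    next
      assume "(v,u) \<in> Q\<^sup>*" "(w,y) \<in> Q\<^sup>*" then show ?case using a by auto
    next
      assume "(v,w) \<in> Q\<^sup>*" "(u,y) \<in> Q\<^sup>*" then show ?case using a by auto
    qed
  qed
qed

lemma ncl_merge:
  assumes symQ: "sym Q" and QR: "Q \<subseteq> R \<times> R" and finR: "finite R"
    and uR: "u \<in> R" and wR: "w \<in> R" and nc: "(u, w) \<notin> Q\<^sup>*"
  shows "ncl R (Q \<union> {(u,w),(w,u)}) + 1 = ncl R Q"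
proof -
  define Q' where "Q' = Q \<union> {(u,w),(w,u)}"
  define Cu where "Cu = Q\<^sup>* `` {u}"
  define Cw where "Cw = Q\<^sup>* `` {w}"
  define N where "N = (\<lambda>v. Q\<^sup>* `` {v}) ` {v\<in>R. v \<notin> Cu \<union> Cw}"
  have sub: "Q\<^sup>* \<subseteq> Q'\<^sup>*" unfolding Q'_def by (rule rtrancl_mono) auto
  have uw': "(u,w) \<in> Q'\<^sup>*" "(w,u) \<in> Q'\<^sup>*" unfolding Q'_def by auto
  have symQ': "sym Q'" using symQ unfolding Q'_def sym_def by auto
  have cl: "Q'\<^sup>* `` {v} = (if v \<in> Cu \<union> Cw then Cu \<union> Cw else Q\<^sup>* `` {v})" if vR: "v \<in> R" for v
  proof (cases "v \<in> Cu")
    case True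
    then have vu: "(v,u) \<in> Q\<^sup>*" unfolding Cu_def using rt_sym[OF symQ] by auto
    have vw: "(v,w) \<notin> Q\<^sup>*" using vu nc rt_sym[OF symQ] by (meson rtrancl_trans)
    have "Q'\<^sup>* `` {v} = Cu \<union> Cw"
    proof
      show "Q'\<^sup>* `` {v} \<subseteq> Cu \<union> Cw"
      proof
        fix y assume "y \<in> Q'\<^sup>* `` {v}"
        then have "(v,y) \<in> Q'\<^sup>*" by auto
        from rt_add_edge[OF symQ this[unfolded Q'_def]] vw
        have "(v, y) \<in> Q\<^sup>* \<or> (w, y) \<in> Q\<^sup>*" by auto
        then show "y \<in> Cu \<union> Cw" unfolding Cu_def Cw_def
          using rt_sym[OF symQ] vu by (meson ImageI rtrancl_trans singletonI UnI1 UnI2)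
      qed
    next
      have "(v,u) \<in> Q'\<^sup>*" using vu sub by auto
      moreover have "(v,w) \<in> Q'\<^sup>*" using vu sub uw' by (meson rtrancl_trans subsetD)
      ultimately show "Cu \<union> Cw \<subseteq> Q'\<^sup>* `` {v}" unfolding Cu_def Cw_def
        using sub by (auto intro: rtrancl_trans)
    qed
    then show ?thesis using True by simp
  next
    case nu: False
    show ?thesis
    proof (cases "v \<in> Cw")
      case True
      then have vw: "(v,w) \<in> Q\<^sup>*" unfolding Cw_def using rt_sym[OF symQ] by auto
      have vu: "(v,u) \<notin> Q\<^sup>*" using vw nc rt_sym[OF symQ] by (meson rtrancl_trans)
      have "Q'\<^sup>* `` {v} = Cu \<union> Cw"
      proof
        show "Q'\<^sup>* `` {v} \<subseteq> Cu \<union> Cw"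
        proof
          fix y assume "y \<in> Q'\<^sup>* `` {v}"
          then have "(v,y) \<in> Q'\<^sup>*" by auto
          from rt_add_edge[OF symQ this[unfolded Q'_def]] vu
          have "(v, y) \<in> Q\<^sup>* \<or> (u, y) \<in> Q\<^sup>*" by auto
          then show "y \<in> Cu \<union> Cw" unfolding Cu_def Cw_def
            using rt_sym[OF symQ] vw by (meson ImageI rtrancl_trans singletonI UnI1 UnI2)
        qed
      next
        have "(v,w) \<in> Q'\<^sup>*" using vw sub by auto
        moreover have "(v,u) \<in> Q'\<^sup>*" using vw sub uw' by (meson rtrancl_trans subsetD)
        ultimately show "Cu \<union> Cw \<subseteq> Q'\<^sup>* `` {v}" unfolding Cu_def Cw_def
          using sub by (auto intro: rtrancl_trans)
      qed
      then show ?thesis using True by simp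
    next
      case nw: False
      have vu: "(v,u) \<notin> Q\<^sup>*" using nu unfolding Cu_def using rt_sym[OF symQ] by auto
      have vw: "(v,w) \<notin> Q\<^sup>*" using nw unfolding Cw_def using rt_sym[OF symQ] by auto
      have "Q'\<^sup>* `` {v} = Q\<^sup>* `` {v}"
      proof
        show "Q'\<^sup>* `` {v} \<subseteq> Q\<^sup>* `` {v}"
        proof
          fix y assume "y \<in> Q'\<^sup>* `` {v}"
          then have "(v,y) \<in> Q'\<^sup>*" by auto
          from rt_add_edge[OF symQ this[unfolded Q'_def]] vu vw
          show "y \<in> Q\<^sup>* `` {v}" by auto
        qed
      qed (use sub in auto)
      then show ?thesis using nu nw by simp
    qed
  qed
  have uCu: "u \<in> Cu" and wCw: "w \<in> Cw" unfolding Cu_def Cw_def by auto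
  have wCu: "w \<notin> Cu" and uCw: "u \<notin> Cw" unfolding Cu_def Cw_def using nc rt_sym[OF symQ] by auto
  have c1: "cls R Q' = insert (Cu \<union> Cw) N"
  proof
    show "cls R Q' \<subseteq> insert (Cu \<union> Cw) N"
      unfolding cls_def N_def using cl by auto
    show "insert (Cu \<union> Cw) N \<subseteq> cls R Q'"
    proof -
      have "Cu \<union> Cw \<in> cls R Q'" unfolding cls_def using cl[OF uR] uCu uR by force
      moreover have "N \<subseteq> cls R Q'" unfolding cls_def N_def using cl by auto
      ultimately show ?thesis by auto
    qed
  qed
  have c2: "cls R Q = insert Cu (insert Cw N)"
  proof
    show "cls R Q \<subseteq> insert Cu (insert Cw N)"
    proof
      fix C assume "C \<in> cls R Q"
      then obtain v where v: "v \<in> R" "C = Q\<^sup>* `` {v}" unfolding cls_def by auto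
      show "C \<in> insert Cu (insert Cw N)"
      proof (cases "v \<in> Cu \<union> Cw")
        case True
        then have "(u,v) \<in> Q\<^sup>* \<or> (w,v) \<in> Q\<^sup>*" unfolding Cu_def Cw_def by auto
        then have "C = Cu \<or> C = Cw" unfolding Cu_def Cw_def v(2)
          using rt_class_eq[OF symQ] by metis
        then show ?thesis by auto
      next
        case False then show ?thesis unfolding N_def using v by auto
      qed
    qed
    show "insert Cu (insert Cw N) \<subseteq> cls R Q"
      unfolding cls_def N_def Cu_def Cw_def using uR wR by auto
  qed
  have notN: "C \<notin> N" if "C = Cu \<or> C = Cw \<or> C = Cu \<union> Cw" for C
  proof
    assume "C \<in> N"
    then obtain v where v: "v \<in> R" "v \<notin> Cu \<union> Cw" "C = Q\<^sup>* `` {v}" unfolding N_def by auto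
    have "u \<in> C \<or> w \<in> C" using that uCu wCw by auto
    then have "(v,u) \<in> Q\<^sup>* \<or> (v,w) \<in> Q\<^sup>*" using v(3) by auto
    then have "v \<in> Cu \<or> v \<in> Cw" unfolding Cu_def Cw_def using rt_sym[OF symQ] by auto
    then show False using v(2) by auto
  qed
  have finN: "finite N" unfolding N_def using finR by simp
  have neq: "Cu \<noteq> Cw" using uCu uCw by auto
  have "ncl R Q' = card N + 1" unfolding ncl_def c1 using finN notN by simp
  moreover have "ncl R Q = card N + 2" unfolding ncl_def c2 using finN notN neq by simp
  ultimately show ?thesis unfolding Q'_def by simp
qed

definition acyc :: "('e \<Rightarrow> 'a \<times> 'a) \<Rightarrow> ('a \<times> 'a) set \<Rightarrow> 'e set \<Rightarrow> bool" where
  "acyc ends B F \<longleftrightarrow> (\<forall>e\<in>F. ends e \<notin> (B \<union> edge_rel ends (F - {e}))\<^sup>*)"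

lemma edge_rel_insert: "edge_rel ends (insert e F) =
   edge_rel ends F \<union> {(fst (ends e), snd (ends e)), (snd (ends e), fst (ends e))}"
  unfolding edge_rel_def by (cases "ends e") auto

lemma edge_rel_Un: "edge_rel ends (F \<union> G) = edge_rel ends F \<union> edge_rel ends G"
  unfolding edge_rel_def by auto

lemma edge_rel_mono: "F \<subseteq> G \<Longrightarrow> edge_rel ends F \<subseteq> edge_rel ends G"
  unfolding edge_rel_def by auto

lemma edge_rel_sym: "sym (edge_rel ends F)"
  unfolding edge_rel_def sym_def by auto

lemma edge_rel_sub: "\<forall>e\<in>F. fst (ends e) \<in> R \<and> snd (ends e) \<in> R \<Longrightarrow> edge_rel ends F \<subseteq> R \<times> R"
  unfolding edge_rel_def by (force)

lemma ends_in_edge_rel: "e \<in> F \<Longrightarrow> ends e \<in> edge_rel ends F"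
  unfolding edge_rel_def by (cases "ends e") auto

lemma ncl_same:
  assumes "sym Q" "(u,w) \<in> Q\<^sup>*"
  shows "ncl R (Q \<union> {(u,w),(w,u)}) = ncl R Q"
proof -
  have "(Q \<union> {(u,w),(w,u)})\<^sup>* = Q\<^sup>*"
    by (rule rtrancl_subset) (use assms rt_sym in auto)
  then show ?thesis unfolding ncl_def cls_def by simp
qed

lemma count_le:
  assumes symB: "sym B" and BR: "B \<subseteq> R \<times> R" and finR: "finite R"
    and finF: "finite F" and eR: "\<forall>e\<in>F. fst (ends e) \<in> R \<and> snd (ends e) \<in> R"
  shows "ncl R B \<le> ncl R (B \<union> edge_rel ends F) + card F
     \<and> (acyc ends B F \<longrightarrow> ncl R B = ncl R (B \<union> edge_rel ends F) + card F)"
  using finF eR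
proof (induction F rule: finite_induct)
  case empty then show ?case by (simp add: edge_rel_def)
next
  case (insert e F)
  define u where "u = fst (ends e)"
  define w where "w = snd (ends e)"
  define Q where "Q = B \<union> edge_rel ends F"
  have symQ: "sym Q" unfolding Q_def using symB edge_rel_sym by (metis sym_Un)
  have QR: "Q \<subseteq> R \<times> R" unfolding Q_def using BR edge_rel_sub[of F ends R] insert.prems by auto
  have eq: "B \<union> edge_rel ends (insert e F) = Q \<union> {(u,w),(w,u)}"
    unfolding Q_def u_def w_def edge_rel_insert by auto
  have IH: "ncl R B \<le> ncl R Q + card F \<and> (acyc ends B F \<longrightarrow> ncl R B = ncl R Q + card F)"
    using insert.IH insert.prems unfolding Q_def by auto
  have ac: "acyc ends B F" if "acyc ends B (insert e F)"
    unfolding acyc_def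
  proof
    fix f assume f: "f \<in> F"
    have "(B \<union> edge_rel ends (F - {f}))\<^sup>* \<subseteq> (B \<union> edge_rel ends (insert e F - {f}))\<^sup>*"
      by (intro rtrancl_mono Un_mono order.refl edge_rel_mono) auto
    then show "ends f \<notin> (B \<union> edge_rel ends (F - {f}))\<^sup>*" using that f unfolding acyc_def by auto
  qed
  have uR: "u \<in> R" "w \<in> R" using insert.prems unfolding u_def w_def by auto
  show ?case
  proof (cases "(u,w) \<in> Q\<^sup>*")
    case True
    have "ncl R (Q \<union> {(u,w),(w,u)}) = ncl R Q" using ncl_same[OF symQ True] .
    moreover have "\<not> acyc ends B (insert e F)"
    proof
      assume "acyc ends B (insert e F)"
      then have "ends e \<notin> (B \<union> edge_rel ends F)\<^sup>*" unfolding acyc_def using insert.hyps(2) by auto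
      then show False using True unfolding Q_def u_def w_def by simp
    qed
    ultimately show ?thesis using IH eq insert.hyps by simp
  next
    case False
    have "ncl R (Q \<union> {(u,w),(w,u)}) + 1 = ncl R Q" using ncl_merge[OF symQ QR finR uR False] .
    then show ?thesis using IH eq insert.hyps ac by simp
  qed
qed

lemma count_cyc:
  assumes symB: "sym B" and BR: "B \<subseteq> R \<times> R" and finR: "finite R"
    and finF: "finite F" and eR: "\<forall>e\<in>F. fst (ends e) \<in> R \<and> snd (ends e) \<in> R"
    and nac: "\<not> acyc ends B F"
  shows "ncl R B + 1 \<le> ncl R (B \<union> edge_rel ends F) + card F"
proof -
  obtain e where e: "e \<in> F" "ends e \<in> (B \<union> edge_rel ends (F - {e}))\<^sup>*" using nac unfolding acyc_def by auto
  define Q where "Q = B \<union> edge_rel ends (F - {e})"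
  have symQ: "sym Q" unfolding Q_def using symB edge_rel_sym by (metis sym_Un)
  have eq: "B \<union> edge_rel ends F = Q \<union> {(fst (ends e), snd (ends e)), (snd (ends e), fst (ends e))}"
    unfolding Q_def using edge_rel_insert[of ends e "F - {e}"] e(1) by (auto simp: insert_absorb)
  have "ncl R (B \<union> edge_rel ends F) = ncl R Q" unfolding eq
    by (rule ncl_same[OF symQ]) (use e(2) Q_def in simp)
  moreover have "ncl R B \<le> ncl R Q + card (F - {e})"
    using count_le[OF symB BR finR, of "F - {e}" ends] finF eR unfolding Q_def by auto
  moreover have "card (F - {e}) + 1 = card F" using e(1) finF
    by (metis card_Suc_Diff1 Suc_eq_plus1)
  ultimately show ?thesis by simp
qed

lemma ncl_empty: "ncl R {} = card R"
proof -
  have "cls R {} = (\<lambda>v. {v}) ` R" unfolding cls_def by auto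
  then show ?thesis unfolding ncl_def by (simp add: card_image)
qed

lemma ncl_pos: "finite R \<Longrightarrow> R \<noteq> {} \<Longrightarrow> ncl R Q \<ge> 1"
  unfolding ncl_def cls_def by (simp add: Suc_leI card_gt_0_iff)

lemma ncl_one_iff:
  assumes "finite R" "R \<noteq> {}" "sym Q"
  shows "ncl R Q = 1 \<longleftrightarrow> (\<forall>u\<in>R. \<forall>v\<in>R. (u, v) \<in> Q\<^sup>*)"
proof
  assume "ncl R Q = 1"
  then obtain C where C: "cls R Q = {C}" unfolding ncl_def by (auto simp: card_Suc_eq)
  show "\<forall>u\<in>R. \<forall>v\<in>R. (u, v) \<in> Q\<^sup>*"
  proof (intro ballI)
    fix u v assume "u \<in> R" "v \<in> R"
    then have "Q\<^sup>* `` {u} = C" "Q\<^sup>* `` {v} = C" using C unfolding cls_def by auto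
    then show "(u,v) \<in> Q\<^sup>*" by (metis Image_singleton_iff rtrancl.rtrancl_refl)
  qed
next
  assume a: "\<forall>u\<in>R. \<forall>v\<in>R. (u, v) \<in> Q\<^sup>*"
  obtain r where r: "r \<in> R" using assms by auto
  have "cls R Q = {Q\<^sup>* `` {r}}" unfolding cls_def using r a rt_class_eq[OF assms(3)] by force
  then show "ncl R Q = 1" unfolding ncl_def by simp
qed


lemma conn_eq: "conn ends K F = (K \<times> K \<union> edge_rel ends F)\<^sup>*"
  unfolding conn_def by (simp add: Un_commute)

lemma tree_iff: "is_spanning_tree_contr R ends E K F \<longleftrightarrow>
   F \<subseteq> E \<and> (\<forall>u\<in>R. \<forall>v\<in>R. (u, v) \<in> (K \<times> K \<union> edge_rel ends F)\<^sup>*) \<and> acyc ends (K \<times> K) F"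
  unfolding is_spanning_tree_contr_def acyc_def conn_eq ..

lemma KK_sym: "sym (K \<times> K)" unfolding sym_def by auto

lemma mst_exists:
  fixes c :: "'e \<Rightarrow> real"
  assumes finR: "finite R" and finE: "finite E"
    and ends_in: "\<forall>e\<in>E. fst (ends e) \<in> R \<and> snd (ends e) \<in> R"
    and KR: "K \<subseteq> R"
    and connE: "\<forall>u\<in>R. \<forall>v\<in>R. (u, v) \<in> (K \<times> K \<union> edge_rel ends E)\<^sup>*"
  shows "\<exists>F. is_spanning_tree_contr R ends E K F \<and> mst_contr R ends E c K = sum c F
     \<and> (\<forall>G. is_spanning_tree_contr R ends E K G \<longrightarrow> sum c F \<le> sum c G)"
proof -
  define S where "S = {F. F \<subseteq> E \<and> (\<forall>u\<in>R. \<forall>v\<in>R. (u, v) \<in> (K \<times> K \<union> edge_rel ends F)\<^sup>*)}"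
  have "E \<in> S" unfolding S_def using connE by auto
  then obtain F0 where F0: "F0 \<in> S" "\<forall>G. G \<in> S \<longrightarrow> card F0 \<le> card G"
    using ex_has_least_nat[of "\<lambda>F. F \<in> S" E card] by auto
  have ac0: "acyc ends (K \<times> K) F0"
    unfolding acyc_def
  proof (rule ccontr)
    assume "\<not> (\<forall>e\<in>F0. ends e \<notin> (K \<times> K \<union> edge_rel ends (F0 - {e}))\<^sup>*)"
    then obtain e where e: "e \<in> F0" "ends e \<in> (K \<times> K \<union> edge_rel ends (F0 - {e}))\<^sup>*" by auto
    have "(K \<times> K \<union> edge_rel ends F0)\<^sup>* = (K \<times> K \<union> edge_rel ends (F0 - {e}))\<^sup>*"
    proof (rule rtrancl_subset)
      show "K \<times> K \<union> edge_rel ends (F0 - {e}) \<subseteq> K \<times> K \<union> edge_rel ends F0"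
        using edge_rel_mono[of "F0 - {e}" F0 ends] by auto
      have symQ: "sym (K \<times> K \<union> edge_rel ends (F0 - {e}))"
        using KK_sym edge_rel_sym by (metis sym_Un)
      have "edge_rel ends F0 = edge_rel ends (F0 - {e}) \<union> {(fst (ends e), snd (ends e)), (snd (ends e), fst (ends e))}"
        using edge_rel_insert[of ends e "F0 - {e}"] e(1) by (auto simp: insert_absorb)
      moreover have "(snd (ends e), fst (ends e)) \<in> (K \<times> K \<union> edge_rel ends (F0 - {e}))\<^sup>*"
        using rt_sym[OF symQ] e(2) by (metis prod.collapse)
      ultimately show "K \<times> K \<union> edge_rel ends F0 \<subseteq> (K \<times> K \<union> edge_rel ends (F0 - {e}))\<^sup>*"
        using e(2) by auto
    qed
    then have "F0 - {e} \<in> S" using F0(1) unfolding S_def by auto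
    then have "card F0 \<le> card (F0 - {e})" using F0(2) by auto
    moreover have "finite F0" using F0(1) finE unfolding S_def by (auto intro: finite_subset)
    ultimately show False using e(1) by (metis card_Diff1_less leD)
  qed
  define Tr where "Tr = {F. is_spanning_tree_contr R ends E K F}"
  have "F0 \<in> Tr" unfolding Tr_def tree_iff using F0(1) ac0 unfolding S_def by auto
  have finTr: "finite Tr" unfolding Tr_def is_spanning_tree_contr_def
    by (rule finite_subset[of _ "Pow E"]) (use finE in auto)
  define m where "m = Min (sum c ` Tr)"
  have "m \<in> sum c ` Tr" unfolding m_def using finTr \<open>F0 \<in> Tr\<close> by (intro Min_in) auto
  then obtain F where F: "F \<in> Tr" "sum c F = m" by auto
  have minF: "\<forall>G\<in>Tr. sum c F \<le> sum c G" using F finTr unfolding m_def by auto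
  have "{sum c F | F. is_spanning_tree_contr R ends E K F} = sum c ` Tr" unfolding Tr_def by auto
  then have "mst_contr R ends E c K = m" unfolding mst_contr_def m_def by simp
  then show ?thesis using F minF unfolding Tr_def by auto
qed

lemma mst_prop:
  fixes c :: "'e \<Rightarrow> real"
  assumes finR: "finite R" and finE: "finite E" and Rne: "R \<noteq> {}"
    and ends_in: "\<forall>e\<in>E. fst (ends e) \<in> R \<and> snd (ends e) \<in> R"
    and KR: "K \<subseteq> R"
    and trF: "is_spanning_tree_contr R ends E K F"
    and minF: "\<forall>G. is_spanning_tree_contr R ends E K G \<longrightarrow> sum c F \<le> sum c G"
    and f: "f \<in> F"
  shows "ends f \<notin> (K \<times> K \<union> edge_rel ends ((F - {f}) \<union> {e\<in>E. c e < c f}))\<^sup>*"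
proof
  assume conn_f: "ends f \<in> (K \<times> K \<union> edge_rel ends ((F - {f}) \<union> {e\<in>E. c e < c f}))\<^sup>*"
  have FE: "F \<subseteq> E" and connF: "\<forall>u\<in>R. \<forall>v\<in>R. (u, v) \<in> (K \<times> K \<union> edge_rel ends F)\<^sup>*"
    and acF: "acyc ends (K \<times> K) F" using trF unfolding tree_iff by auto
  define Q where "Q = K \<times> K \<union> edge_rel ends (F - {f})"
  have symKE: "sym (K \<times> K \<union> edge_rel ends G)" for G using KK_sym edge_rel_sym by (rule sym_Un)
  have symQ: "sym Q" unfolding Q_def by (rule symKE)
  have KKR: "K \<times> K \<subseteq> R \<times> R" using KR by auto
  have finF: "finite F" using FE finE by (rule finite_subset)
  have eRF: "\<forall>e\<in>G. fst (ends e) \<in> R \<and> snd (ends e) \<in> R" if "G \<subseteq> E" for G using that ends_in by auto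
  have QR: "Q \<subseteq> R \<times> R" unfolding Q_def using KKR edge_rel_sub[OF eRF[of "F - {f}"]] FE by auto
  have nf: "ends f \<notin> Q\<^sup>*" using acF f unfolding acyc_def Q_def by auto
  obtain e where e: "e \<in> E" "c e < c f" "ends e \<notin> Q\<^sup>*"
  proof (rule ccontr)
    assume "\<not> thesis"
    then have all: "\<forall>e\<in>E. c e < c f \<longrightarrow> ends e \<in> Q\<^sup>*" using that by blast
    have "(K \<times> K \<union> edge_rel ends ((F - {f}) \<union> {e\<in>E. c e < c f}))\<^sup>* = Q\<^sup>*"
    proof (rule rtrancl_subset)
      show "Q \<subseteq> K \<times> K \<union> edge_rel ends (F - {f} \<union> {e \<in> E. c e < c f})"
        unfolding Q_def edge_rel_Un by auto
      show "K \<times> K \<union> edge_rel ends (F - {f} \<union> {e \<in> E. c e < c f}) \<subseteq> Q\<^sup>*"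
      proof
        fix p assume "p \<in> K \<times> K \<union> edge_rel ends (F - {f} \<union> {e \<in> E. c e < c f})"
        then have "p \<in> Q \<or> (\<exists>e\<in>E. c e < c f \<and> (ends e = p \<or> ends e = prod.swap p))"
          unfolding Q_def edge_rel_Un by (auto simp: edge_rel_def)
        then show "p \<in> Q\<^sup>*"
        proof
          assume "\<exists>e\<in>E. c e < c f \<and> (ends e = p \<or> ends e = prod.swap p)"
          then obtain e where "e \<in> E" "c e < c f" "ends e = p \<or> ends e = prod.swap p" by blast
          then have ee: "ends e \<in> Q\<^sup>*" and "ends e = p \<or> ends e = prod.swap p" using all by auto
          then show "p \<in> Q\<^sup>*"
          proof (cases p)
            case (Pair a b)
            then show ?thesis using ee \<open>ends e = p \<or> ends e = prod.swap p\<close> rt_sym[OF symQ, of b a] by auto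
          qed
        qed auto
      qed
    qed
    then show False using conn_f nf by simp
  qed
  have eF: "e \<notin> F"
  proof
    assume "e \<in> F"
    moreover have "e \<noteq> f" using e(2) by auto
    ultimately have "e \<in> F - {f}" by auto
    then have "ends e \<in> edge_rel ends (F - {f})" by (rule ends_in_edge_rel)
    then have "ends e \<in> Q" unfolding Q_def by blast
    then show False using e(3) by auto
  qed
  define F' where "F' = insert e (F - {f})"
  have F'E: "F' \<subseteq> E" unfolding F'_def using FE e(1) by auto
  have finF': "finite F'" using F'E finE by (rule finite_subset)
  have "card F' = Suc (card (F - {f}))" unfolding F'_def using eF finF by simp
  then have cardF': "card F' = card F" using f finF by (metis card_Suc_Diff1)
  have ncl0: "ncl R (K \<times> K) = ncl R (K \<times> K \<union> edge_rel ends F) + card F"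
    using count_le[OF KK_sym KKR finR finF eRF[OF FE]] acF by auto
  have ncl1: "ncl R (K \<times> K \<union> edge_rel ends F) = 1"
    using ncl_one_iff[OF finR Rne symKE] connF by blast
  have acFf: "acyc ends (K \<times> K) (F - {f})"
    unfolding acyc_def
  proof
    fix g assume g: "g \<in> F - {f}"
    have "(K \<times> K \<union> edge_rel ends (F - {f} - {g}))\<^sup>* \<subseteq> (K \<times> K \<union> edge_rel ends (F - {g}))\<^sup>*"
      by (intro rtrancl_mono Un_mono order.refl edge_rel_mono) auto
    then show "ends g \<notin> (K \<times> K \<union> edge_rel ends (F - {f} - {g}))\<^sup>*" using acF g unfolding acyc_def by auto
  qed
  have ncl2: "ncl R (K \<times> K) = ncl R Q + card (F - {f})"
    using count_le[OF KK_sym KKR finR _ eRF, of "F - {f}"] acFf finF FE unfolding Q_def by auto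
  have cF: "card (F - {f}) + 1 = card F" using f finF by (metis card_Suc_Diff1 Suc_eq_plus1)
  have QF': "K \<times> K \<union> edge_rel ends F' = Q \<union> {(fst (ends e), snd (ends e)), (snd (ends e), fst (ends e))}"
    unfolding F'_def Q_def edge_rel_insert by auto
  have eR: "fst (ends e) \<in> R" "snd (ends e) \<in> R" using e(1) ends_in by auto
  have ncl3: "ncl R (K \<times> K \<union> edge_rel ends F') + 1 = ncl R Q"
    unfolding QF' by (rule ncl_merge[OF symQ QR finR eR]) (use e(3) in simp)
  have ncl4: "ncl R (K \<times> K \<union> edge_rel ends F') = 1" using ncl0 ncl1 ncl2 cF ncl3 by simp
  have connF': "\<forall>u\<in>R. \<forall>v\<in>R. (u, v) \<in> (K \<times> K \<union> edge_rel ends F')\<^sup>*"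
    using ncl_one_iff[OF finR Rne symKE] ncl4 by blast
  have acF': "acyc ends (K \<times> K) F'"
  proof (rule ccontr)
    assume "\<not> acyc ends (K \<times> K) F'"
    from count_cyc[OF KK_sym KKR finR finF' eRF[OF F'E] this]
    show False using ncl4 ncl0 ncl1 cardF' by simp
  qed
  have trF': "is_spanning_tree_contr R ends E K F'" unfolding tree_iff using F'E connF' acF' by auto
  have "sum c F' = sum c F - c f + c e" unfolding F'_def using eF f finF
    by (simp add: sum.insert_if sum_diff1)
  then have "sum c F' < sum c F" using e(2) by simp
  then show False using minF[rule_format, OF trF'] by linarith
qed


lemma acyc_mono: "acyc ends B F \<Longrightarrow> G \<subseteq> F \<Longrightarrow> acyc ends B G"
  unfolding acyc_def
proof
  fix g assume a: "\<forall>e\<in>F. ends e \<notin> (B \<union> edge_rel ends (F - {e}))\<^sup>*" "G \<subseteq> F" "g \<in> G"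
  have "(B \<union> edge_rel ends (G - {g}))\<^sup>* \<subseteq> (B \<union> edge_rel ends (F - {g}))\<^sup>*"
    by (intro rtrancl_mono Un_mono order.refl edge_rel_mono) (use a in auto)
  then show "ends g \<notin> (B \<union> edge_rel ends (G - {g}))\<^sup>*" using a by auto
qed

lemma thresh:
  fixes c :: "'e \<Rightarrow> real"
  assumes finR: "finite R" and finE: "finite E" and Rne: "R \<noteq> {}"
    and ends_in: "\<forall>e\<in>E. fst (ends e) \<in> R \<and> snd (ends e) \<in> R"
    and KR: "K \<subseteq> R"
    and trF: "is_spanning_tree_contr R ends E K F"
    and minF: "\<forall>G. is_spanning_tree_contr R ends E K G \<longrightarrow> sum c F \<le> sum c G"
  shows "card {e\<in>E - F. c e > t} + ncl R (K \<times> K \<union> edge_rel ends {e\<in>E. c e \<le> t})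
          \<ge> card {e\<in>E. c e > t} + 1"
proof -
  define L where "L = {e\<in>E. c e \<le> t}"
  define D where "D = {e\<in>E. c e > t}"
  define B where "B = K \<times> K \<union> edge_rel ends L"
  define G where "G = F \<inter> D"
  have FE: "F \<subseteq> E" using trF unfolding tree_iff by auto
  have symB: "sym B" unfolding B_def using KK_sym edge_rel_sym by (rule sym_Un)
  have BR: "B \<subseteq> R \<times> R" unfolding B_def using KR edge_rel_sub[of L ends R] ends_in unfolding L_def by auto
  have finD: "finite D" unfolding D_def using finE by simp
  have finG: "finite G" unfolding G_def using finD by simp
  have GE: "G \<subseteq> E" unfolding G_def D_def by auto
  have eRG: "\<forall>e\<in>G. fst (ends e) \<in> R \<and> snd (ends e) \<in> R" using GE ends_in by auto
  have acG: "acyc ends B G"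
    unfolding acyc_def
  proof
    fix g assume g: "g \<in> G"
    then have gF: "g \<in> F" and gt: "c g > t" unfolding G_def D_def by auto
    have "(B \<union> edge_rel ends (G - {g}))\<^sup>* \<subseteq> (K \<times> K \<union> edge_rel ends ((F - {g}) \<union> {e\<in>E. c e < c g}))\<^sup>*"
    proof (rule rtrancl_mono)
      have "L \<union> (G - {g}) \<subseteq> (F - {g}) \<union> {e\<in>E. c e < c g}" unfolding L_def G_def using gt by auto
      from edge_rel_mono[OF this, of ends]
      show "B \<union> edge_rel ends (G - {g}) \<subseteq> K \<times> K \<union> edge_rel ends (F - {g} \<union> {e \<in> E. c e < c g})"
        unfolding B_def edge_rel_Un by auto
    qed
    then show "ends g \<notin> (B \<union> edge_rel ends (G - {g}))\<^sup>*"
      using mst_prop[OF finR finE Rne ends_in KR trF minF gF] by auto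
  qed
  have "ncl R B = ncl R (B \<union> edge_rel ends G) + card G"
    using count_le[OF symB BR finR finG eRG] acG by auto
  moreover have "ncl R (B \<union> edge_rel ends G) \<ge> 1" using ncl_pos[OF finR Rne] .
  ultimately have cG: "card G + 1 \<le> ncl R B" by simp
  have eq: "{e\<in>E - F. c e > t} = D - G" unfolding D_def G_def by auto
  have "card (D - G) + card G = card D" using finD
    by (metis G_def card_Diff_subset_Int inf_le2 Int_absorb2 card_Diff_subset finite_Int le_add_diff_inverse2 card_mono finG)
  then show ?thesis using cG unfolding eq B_def[symmetric] L_def[symmetric] D_def[symmetric]
    using B_def L_def by simp
qed

lemma tree_count:
  fixes c :: "'e \<Rightarrow> real"
  assumes finR: "finite R" and finE: "finite E" and Rne: "R \<noteq> {}"
    and ends_in: "\<forall>e\<in>E. fst (ends e) \<in> R \<and> snd (ends e) \<in> R"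
    and tree: "is_spanning_tree_contr R ends E {} E"
  shows "card {e\<in>E. c e > t} + 1 = ncl R (edge_rel ends {e\<in>E. c e \<le> t})"
proof -
  define L where "L = {e\<in>E. c e \<le> t}"
  define D where "D = {e\<in>E. c e > t}"
  have ac: "acyc ends {} E" and conn: "\<forall>u\<in>R. \<forall>v\<in>R. (u, v) \<in> (edge_rel ends E)\<^sup>*"
    using tree unfolding tree_iff by auto
  have sym0: "sym ({}::('a\<times>'a) set)" by (simp add: sym_def)
  have R0: "({}::('a\<times>'a) set) \<subseteq> R \<times> R" by simp
  have "ncl R {} = ncl R ({} \<union> edge_rel ends E) + card E"
    using count_le[OF sym0 R0 finR finE ends_in] ac by auto
  moreover have "ncl R (edge_rel ends E) = 1" using ncl_one_iff[OF finR Rne edge_rel_sym] conn by blast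
  moreover have "ncl R {} = ncl R ({} \<union> edge_rel ends L) + card L"
    using count_le[OF sym0 R0 finR, of L ends] acyc_mono[OF ac, of L] finE ends_in unfolding L_def by auto
  moreover have "card E = card L + card D"
  proof -
    have "E = L \<union> D" "L \<inter> D = {}" unfolding L_def D_def by auto
    then show ?thesis using finE by (metis card_Un_disjoint finite_Un)
  qed
  ultimately show ?thesis unfolding L_def D_def by simp
qed

lemma hit_bound:
  assumes finR: "finite R" and symQ: "sym Q" and QR: "Q \<subseteq> R \<times> R" and KR: "K \<subseteq> R" and Kne: "K \<noteq> {}"
  shows "ncl R (K \<times> K \<union> Q) \<le> 1 + card {C\<in>cls R Q. C \<inter> K = {}}"
proof -
  obtain k0 where k0: "k0 \<in> K" using Kne by auto
  define Q' where "Q' = K \<times> K \<union> Q"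
  have symQ': "sym Q'" unfolding Q'_def using KK_sym symQ by (rule sym_Un)
  have sub: "Q\<^sup>* \<subseteq> Q'\<^sup>*" unfolding Q'_def by (rule rtrancl_mono) auto
  have "cls R Q' \<subseteq> insert (Q'\<^sup>* `` {k0}) {C\<in>cls R Q. C \<inter> K = {}}"
  proof
    fix C assume "C \<in> cls R Q'"
    then obtain v where v: "v \<in> R" "C = Q'\<^sup>* `` {v}" unfolding cls_def by auto
    show "C \<in> insert (Q'\<^sup>* `` {k0}) {C\<in>cls R Q. C \<inter> K = {}}"
    proof (cases "Q\<^sup>* `` {v} \<inter> K = {}")
      case False
      then obtain k where k: "k \<in> K" "(v,k) \<in> Q\<^sup>*" by auto
      have "(k, k0) \<in> Q'\<^sup>*" unfolding Q'_def using k(1) k0 by auto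
      then have "(v, k0) \<in> Q'\<^sup>*" using k(2) sub by (meson rtrancl_trans subsetD)
      then have "C = Q'\<^sup>* `` {k0}" unfolding v(2) by (rule rt_class_eq[OF symQ'])
      then show ?thesis by simp
    next
      case True
      have "Q'\<^sup>* `` {v} \<subseteq> Q\<^sup>* `` {v}"
      proof
        fix y assume "y \<in> Q'\<^sup>* `` {v}"
        then have "(v,y) \<in> Q'\<^sup>*" by simp
        then have "(v,y) \<in> Q\<^sup>*"
        proof (induction rule: rtrancl_induct)
          case base then show ?case by simp
        next
          case (step y z)
          show ?case
          proof (cases "(y,z) \<in> Q")
            case True then show ?thesis using step.IH by (meson rtrancl.rtrancl_into_rtrancl)
          next
            case False
            then have "y \<in> K" using step.hyps(2) unfolding Q'_def by auto
            then show ?thesis using step.IH True by auto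
          qed
        qed
        then show "y \<in> Q\<^sup>* `` {v}" by simp
      qed
      then have "C = Q\<^sup>* `` {v}" using sub v(2) by auto
      then show ?thesis using True v(1) unfolding cls_def by auto
    qed
  qed
  moreover have finN: "finite {C\<in>cls R Q. C \<inter> K = {}}" using fin_cls[OF finR] by simp
  ultimately have "card (cls R Q') \<le> card (insert (Q'\<^sup>* `` {k0}) {C\<in>cls R Q. C \<inter> K = {}})"
    by (intro card_mono) auto
  also have "\<dots> \<le> 1 + card {C\<in>cls R Q. C \<inter> K = {}}"
    using finN by (simp add: card_insert_if)
  finally show ?thesis unfolding ncl_def Q'_def .
qed


lemma lp_bound:
  fixes x :: "'a set \<Rightarrow> real"
  assumes finR: "finite R" and symQ: "sym Q" and QR: "Q \<subseteq> R \<times> R"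
    and subtour: "\<forall>S. S \<subseteq> R \<and> S \<noteq> {} \<longrightarrow>
        (\<Sum>K\<in>{K\<in>hyperedges R. K \<inter> S \<noteq> {}}. x K * (real (card (K \<inter> S)) - 1))
          \<le> real (card S) - 1"
    and total: "(\<Sum>K\<in>hyperedges R. x K * (real (card K) - 1)) = real (card R) - 1"
  shows "(\<Sum>K\<in>hyperedges R. x K * (real (card {C\<in>cls R Q. C \<inter> K \<noteq> {}}) - 1)) \<ge> real (ncl R Q) - 1"
proof -
  define Cs where "Cs = cls R Q"
  define H where "H = hyperedges R"
  have finH: "finite H" unfolding H_def hyperedges_def
    by (rule finite_subset[of _ "Pow R"]) (use finR in auto)
  have finCs: "finite Cs" unfolding Cs_def using fin_cls[OF finR] .
  have CR: "C \<subseteq> R" if "C \<in> Cs" for C using that rt_in[OF QR] unfolding Cs_def cls_def by auto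
  have Cne: "C \<noteq> {}" if "C \<in> Cs" for C using that unfolding Cs_def cls_def by auto
  have finC: "finite C" if "C \<in> Cs" for C using CR[OF that] finR by (rule finite_subset)
  have disj: "C1 \<inter> C2 = {}" if h: "C1 \<in> Cs" "C2 \<in> Cs" "C1 \<noteq> C2" for C1 C2
  proof (rule ccontr)
    assume "C1 \<inter> C2 \<noteq> {}"
    then obtain y where y: "y \<in> C1" "y \<in> C2" by auto
    obtain v1 v2 where v: "C1 = Q\<^sup>* `` {v1}" "C2 = Q\<^sup>* `` {v2}" using h unfolding Cs_def cls_def by auto
    have "C1 = Q\<^sup>* `` {y}" using y(1) v(1) rt_class_eq[OF symQ] by auto
    moreover have "C2 = Q\<^sup>* `` {y}" using y(2) v(2) rt_class_eq[OF symQ] by auto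
    ultimately show False using h(3) by simp
  qed
  have UCs: "\<Union>Cs = R"
  proof
    show "\<Union>Cs \<subseteq> R" using CR by auto
    show "R \<subseteq> \<Union>Cs" unfolding Cs_def cls_def by auto
  qed
  have sumC: "(\<Sum>C\<in>Cs. card C) = card R"
  proof -
    have "card (\<Union>Cs) = sum card Cs"
      by (rule card_Union_disjoint) (use disj finC in \<open>auto simp: pairwise_def disjnt_def\<close>)
    then show ?thesis using UCs by simp
  qed
  have sumK: "(\<Sum>C\<in>Cs. card (K \<inter> C)) = card K" if KR: "K \<subseteq> R" for K
  proof -
    have "card (\<Union>C\<in>Cs. K \<inter> C) = (\<Sum>C\<in>Cs. card (K \<inter> C))"
      by (rule card_UN_disjoint) (use finCs finC disj in auto)
    moreover have "(\<Union>C\<in>Cs. K \<inter> C) = K" using UCs KR by auto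
    ultimately show ?thesis by simp
  qed
  have st: "(\<Sum>K\<in>H. x K * (if K \<inter> C \<noteq> {} then real (card (K \<inter> C)) - 1 else 0)) \<le> real (card C) - 1"
    if "C \<in> Cs" for C
  proof -
    have "(\<Sum>K\<in>{K\<in>H. K \<inter> C \<noteq> {}}. x K * (real (card (K \<inter> C)) - 1))
          = (\<Sum>K\<in>H. x K * (if K \<inter> C \<noteq> {} then real (card (K \<inter> C)) - 1 else 0))"
      using finH by (simp add: sum.inter_filter) (rule sum.cong, auto)
    moreover have "C \<subseteq> R \<and> C \<noteq> {}" using CR[OF that] Cne[OF that] by simp
    note subtour[rule_format, OF this, folded H_def]
    ultimately show ?thesis by linarith
  qed
  have "(\<Sum>C\<in>Cs. \<Sum>K\<in>H. x K * (if K \<inter> C \<noteq> {} then real (card (K \<inter> C)) - 1 else 0))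
         \<le> (\<Sum>C\<in>Cs. real (card C) - 1)"
    by (rule sum_mono) (rule st)
  also have "\<dots> = real (card R) - real (card Cs)"
  proof -
    have "real (card R) = (\<Sum>C\<in>Cs. real (card C))" using sumC by (metis of_nat_sum)
    then show ?thesis by (simp add: sum_subtractf)
  qed
  finally have A0: "(\<Sum>C\<in>Cs. \<Sum>K\<in>H. x K * (if K \<inter> C \<noteq> {} then real (card (K \<inter> C)) - 1 else 0))
         \<le> real (card R) - real (card Cs)" .
  have "(\<Sum>K\<in>H. \<Sum>C\<in>Cs. x K * (if K \<inter> C \<noteq> {} then real (card (K \<inter> C)) - 1 else 0))
     = (\<Sum>C\<in>Cs. \<Sum>K\<in>H. x K * (if K \<inter> C \<noteq> {} then real (card (K \<inter> C)) - 1 else 0))"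
    by (rule sum.swap)
  with A0 have A: "(\<Sum>K\<in>H. \<Sum>C\<in>Cs. x K * (if K \<inter> C \<noteq> {} then real (card (K \<inter> C)) - 1 else 0))
         \<le> real (card R) - real (card Cs)" by simp
  have inner: "(\<Sum>C\<in>Cs. x K * (if K \<inter> C \<noteq> {} then real (card (K \<inter> C)) - 1 else 0))
     = x K * (real (card K) - real (card {C\<in>Cs. C \<inter> K \<noteq> {}}))" if "K \<in> H" for K
  proof -
    have KR: "K \<subseteq> R" using that unfolding H_def hyperedges_def by auto
    have "(\<Sum>C\<in>Cs. (if K \<inter> C \<noteq> {} then real (card (K \<inter> C)) - 1 else 0))
        = (\<Sum>C\<in>Cs. real (card (K \<inter> C)) - (if C \<inter> K \<noteq> {} then 1 else 0))"
      by (rule sum.cong) (auto simp: inf_commute[of C K])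
    also have "\<dots> = real (card K) - (\<Sum>C\<in>Cs. (if C \<inter> K \<noteq> {} then 1 else 0))"
    proof -
      have "real (card K) = (\<Sum>C\<in>Cs. real (card (K \<inter> C)))" using sumK[OF KR] by (metis of_nat_sum)
      then show ?thesis by (simp add: sum_subtractf)
    qed
    also have "(\<Sum>C\<in>Cs. (if C \<inter> K \<noteq> {} then 1 else 0)) = real (card {C\<in>Cs. C \<inter> K \<noteq> {}})"
      using finCs by (simp add: sum.inter_filter[symmetric])
    finally show ?thesis by (simp add: sum_distrib_left[symmetric])
  qed
  have B: "(\<Sum>K\<in>H. x K * (real (card K) - real (card {C\<in>Cs. C \<inter> K \<noteq> {}}))) \<le> real (card R) - real (card Cs)"
    using A inner by simp
  have "(\<Sum>K\<in>H. x K * (real (card {C\<in>Cs. C \<inter> K \<noteq> {}}) - 1))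
      = (\<Sum>K\<in>H. x K * (real (card K) - 1)) - (\<Sum>K\<in>H. x K * (real (card K) - real (card {C\<in>Cs. C \<inter> K \<noteq> {}})))"
    by (simp add: sum_subtractf[symmetric] algebra_simps)
  then show ?thesis using B total unfolding H_def Cs_def ncl_def by simp
qed


lemma layer:
  fixes w a :: "'j \<Rightarrow> real"
  assumes "finite J" "\<forall>j\<in>J. a j \<ge> 0" "\<forall>t. (\<Sum>j\<in>{j\<in>J. a j > t}. w j) \<ge> 0"
  shows "(\<Sum>j\<in>J. w j * a j) \<ge> 0"
  using assms
proof (induction "card J" arbitrary: J a rule: less_induct)
  case less
  show ?case
  proof (cases "J = {}")
    case True then show ?thesis by simp
  next
    case False
    define \<mu> where "\<mu> = Min (a ` J)"
    have \<mu>in: "\<mu> \<in> a ` J" unfolding \<mu>_def using less.prems(1) False by simp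
    have \<mu>le: "\<forall>j\<in>J. \<mu> \<le> a j" unfolding \<mu>_def using less.prems(1) by simp
    have \<mu>0: "\<mu> \<ge> 0" using \<mu>in less.prems(2) by auto
    define J' where "J' = {j\<in>J. a j > \<mu>}"
    define a' where "a' = (\<lambda>j. a j - \<mu>)"
    have finJ': "finite J'" unfolding J'_def using less.prems(1) by simp
    have cardlt: "card J' < card J"
    proof -
      obtain j0 where "j0 \<in> J" "a j0 = \<mu>" using \<mu>in by auto
      then have "J' \<subset> J" unfolding J'_def by auto
      then show ?thesis using less.prems(1) by (simp add: psubset_card_mono)
    qed
    have IH: "(\<Sum>j\<in>J'. w j * a' j) \<ge> 0"
    proof (rule less.hyps[OF cardlt finJ'])
      show "\<forall>j\<in>J'. 0 \<le> a' j" unfolding J'_def a'_def by auto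
      show "\<forall>t. 0 \<le> sum w {j \<in> J'. t < a' j}"
      proof
        fix t
        show "0 \<le> sum w {j \<in> J'. t < a' j}"
        proof (cases "t < 0")
          case True
          then have "{j \<in> J'. t < a' j} = {j\<in>J. a j > \<mu>}" unfolding J'_def a'_def by auto
          then show ?thesis using less.prems(3) by simp
        next
          case False
          then have "{j \<in> J'. t < a' j} = {j\<in>J. a j > t + \<mu>}" unfolding J'_def a'_def by auto
          then show ?thesis using less.prems(3) by simp
        qed
      qed
    qed
    have s0: "(\<Sum>j\<in>J. w j) \<ge> 0"
    proof -
      have "{j\<in>J. a j > -1} = J" using less.prems(2) by force
      then show ?thesis using spec[OF less.prems(3), of "-1"] by simp
    qed
    have "(\<Sum>j\<in>J. w j * a j) = (\<Sum>j\<in>J. \<mu> * w j + w j * a' j)"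
      unfolding a'_def by (rule sum.cong) (auto simp: algebra_simps)
    also have "\<dots> = \<mu> * (\<Sum>j\<in>J. w j) + (\<Sum>j\<in>J. w j * a' j)"
      by (simp add: sum.distrib sum_distrib_left)
    also have "(\<Sum>j\<in>J. w j * a' j) = (\<Sum>j\<in>J'. w j * a' j)"
    proof -
      have "(\<Sum>j\<in>J. w j * a' j) = (\<Sum>j\<in>J. if a j > \<mu> then w j * a' j else 0)"
      proof (rule sum.cong)
        fix j assume "j \<in> J"
        then have "\<mu> \<le> a j" using \<mu>le by auto
        then show "w j * a' j = (if a j > \<mu> then w j * a' j else 0)" unfolding a'_def by auto
      qed simp
      also have "\<dots> = (\<Sum>j\<in>J'. w j * a' j)" unfolding J'_def
        using less.prems(1) by (simp add: sum.inter_filter)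
      finally show ?thesis .
    qed
    finally show ?thesis using IH s0 \<mu>0 by (simp add: mult_nonneg_nonneg)
  qed
qed


lemma card_split: "finite A \<Longrightarrow> card A = card {x\<in>A. P x} + card {x\<in>A. \<not> P x}"
proof -
  assume f: "finite A"
  have "A = {x\<in>A. P x} \<union> {x\<in>A. \<not> P x}" by auto
  moreover have "{x\<in>A. P x} \<inter> {x\<in>A. \<not> P x} = {}" by auto
  ultimately show ?thesis using f by (metis (no_types, lifting) card_Un_disjoint finite_Un)
qed

theorem lemma1:
  fixes R :: "'a set" and E :: "'e set" and ends :: "'e \<Rightarrow> 'a \<times> 'a"
    and c :: "'e \<Rightarrow> real" and x :: "'a set \<Rightarrow> real"
  assumes finR: "finite R"
    and finE: "finite E"
    and ends_in: "\<forall>e\<in>E. fst (ends e) \<in> R \<and> snd (ends e) \<in> R"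
    and tree: "is_spanning_tree_contr R ends E {} E"
    and c_nonneg: "\<forall>e\<in>E. c e \<ge> 0"
    and x_nonneg: "\<forall>K\<in>hyperedges R. x K \<ge> 0"
    and subtour: "\<forall>S. S \<subseteq> R \<and> S \<noteq> {} \<longrightarrow>
        (\<Sum>K\<in>{K\<in>hyperedges R. K \<inter> S \<noteq> {}}. x K * (real (card (K \<inter> S)) - 1))
          \<le> real (card S) - 1"
    and total: "(\<Sum>K\<in>hyperedges R. x K * (real (card K) - 1)) = real (card R) - 1"
  shows "(\<Sum>K\<in>hyperedges R. x K * drop_T R ends E c K) \<ge> sum c E"
proof -
  define H where "H = hyperedges R"
  have finH: "finite H" unfolding H_def hyperedges_def
    by (rule finite_subset[of _ "Pow R"]) (use finR in auto)
  have Rne: "R \<noteq> {}"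
  proof
    assume "R = {}"
    then have "hyperedges R = {}" unfolding hyperedges_def by auto
    then show False using total \<open>R = {}\<close> by simp
  qed
  have KR: "K \<subseteq> R" and Kne: "K \<noteq> {}" if "K \<in> H" for K
    using that unfolding H_def hyperedges_def by auto
  have connE: "\<forall>u\<in>R. \<forall>v\<in>R. (u, v) \<in> (edge_rel ends E)\<^sup>*" using tree unfolding tree_iff by auto
  have connK: "\<forall>u\<in>R. \<forall>v\<in>R. (u, v) \<in> (K \<times> K \<union> edge_rel ends E)\<^sup>*" for K
  proof -
    have "(edge_rel ends E)\<^sup>* \<subseteq> (K \<times> K \<union> edge_rel ends E)\<^sup>*" by (rule rtrancl_mono) auto
    then show ?thesis using connE by blast
  qed
  have "\<forall>K\<in>H. \<exists>F. is_spanning_tree_contr R ends E K F \<and> mst_contr R ends E c K = sum c F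
     \<and> (\<forall>G. is_spanning_tree_contr R ends E K G \<longrightarrow> sum c F \<le> sum c G)"
    using mst_exists[OF finR finE ends_in KR connK] by blast
  then obtain Fk where Fk: "\<And>K. K \<in> H \<Longrightarrow> is_spanning_tree_contr R ends E K (Fk K) \<and> mst_contr R ends E c K = sum c (Fk K)
     \<and> (\<forall>G. is_spanning_tree_contr R ends E K G \<longrightarrow> sum c (Fk K) \<le> sum c G)"
    by metis
  have FkE: "Fk K \<subseteq> E" if "K \<in> H" for K using Fk[OF that] unfolding tree_iff by auto
  have drop_eq: "drop_T R ends E c K = sum c (E - Fk K)" if "K \<in> H" for K
    using Fk[OF that] FkE[OF that] finE unfolding drop_T_def by (simp add: sum_diff)
  have key: "(\<Sum>K\<in>H. x K * real (card {e\<in>E - Fk K. c e > t})) \<ge> real (card {e\<in>E. c e > t})" for t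
  proof -
    define L where "L = {e\<in>E. c e \<le> t}"
    define Q where "Q = edge_rel ends L"
    have symQ: "sym Q" unfolding Q_def by (rule edge_rel_sym)
    have QR: "Q \<subseteq> R \<times> R" unfolding Q_def using edge_rel_sub[of L ends R] ends_in unfolding L_def by auto
    have m: "card {e\<in>E. c e > t} + 1 = ncl R Q"
      unfolding Q_def L_def by (rule tree_count[OF finR finE Rne ends_in tree])
    define hit where "hit K = card {C\<in>cls R Q. C \<inter> K \<noteq> {}}" for K
    have per: "real (card {e\<in>E - Fk K. c e > t}) \<ge> real (hit K) - 1" if "K \<in> H" for K
    proof -
      have a: "card {e\<in>E - Fk K. c e > t} + ncl R (K \<times> K \<union> Q) \<ge> card {e\<in>E. c e > t} + 1"
        unfolding Q_def L_def using thresh[OF finR finE Rne ends_in KR[OF that]] Fk[OF that] by blast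
      have b: "ncl R (K \<times> K \<union> Q) \<le> 1 + card {C\<in>cls R Q. C \<inter> K = {}}"
        by (rule hit_bound[OF finR symQ QR KR[OF that] Kne[OF that]])
      have d: "ncl R Q = hit K + card {C\<in>cls R Q. C \<inter> K = {}}"
        unfolding ncl_def hit_def using card_split[OF fin_cls[OF finR], of Q "\<lambda>C. C \<inter> K \<noteq> {}"] by simp
      show ?thesis using a b d m by linarith
    qed
    have "(\<Sum>K\<in>H. x K * real (card {e\<in>E - Fk K. c e > t})) \<ge> (\<Sum>K\<in>H. x K * (real (hit K) - 1))"
      by (rule sum_mono) (use per x_nonneg H_def in \<open>auto intro: mult_left_mono\<close>)
    moreover have "(\<Sum>K\<in>H. x K * (real (hit K) - 1)) \<ge> real (ncl R Q) - 1"
      unfolding H_def hit_def by (rule lp_bound[OF finR symQ QR subtour total])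
    ultimately show ?thesis using m by linarith
  qed
  \<comment> \<open>layer cake\<close>
  define Sg where "Sg = Sigma H (\<lambda>K. E - Fk K)"
  have finSg: "finite Sg" unfolding Sg_def using finH finE by simp
  define J where "J = Sg <+> E"
  define w where "w = case_sum (\<lambda>p::'a set \<times> 'e. x (fst p)) (\<lambda>_::'e. -1::real)"
  define a where "a = case_sum (\<lambda>p::'a set \<times> 'e. c (snd p)) c"
  have finJ: "finite J" unfolding J_def using finSg finE by simp
  have a0: "\<forall>j\<in>J. a j \<ge> 0" unfolding J_def a_def Sg_def using c_nonneg by auto
  have sigsum: "(\<Sum>p\<in>Sigma H B. f (fst p) * g (snd p)) = (\<Sum>K\<in>H. f K * sum g (B K))"
    if "\<forall>K\<in>H. finite (B K)" for B :: "'a set \<Rightarrow> 'e set" and f :: "'a set \<Rightarrow> real" and g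
  proof -
    have "(\<Sum>p\<in>Sigma H B. f (fst p) * g (snd p)) = (\<Sum>K\<in>H. \<Sum>e\<in>B K. f K * g e)"
      using sum.Sigma[OF finH that, of "\<lambda>K e. f K * g e"] by (simp add: case_prod_beta')
    then show ?thesis by (simp add: sum_distrib_left)
  qed
  have cond: "\<forall>t. (\<Sum>j\<in>{j\<in>J. a j > t}. w j) \<ge> 0"
  proof
    fix t
    have "{j\<in>J. a j > t} = Sigma H (\<lambda>K. {e\<in>E - Fk K. c e > t}) <+> {e\<in>E. c e > t}"
      unfolding J_def Sg_def a_def by auto
    then have "(\<Sum>j\<in>{j\<in>J. a j > t}. w j)
        = (\<Sum>p\<in>Sigma H (\<lambda>K. {e\<in>E - Fk K. c e > t}). x (fst p) * 1) - real (card {e\<in>E. c e > t})"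
      using finH finE unfolding w_def by (simp add: sum.Plus comp_def)
    also have "\<dots> = (\<Sum>K\<in>H. x K * real (card {e\<in>E - Fk K. c e > t})) - real (card {e\<in>E. c e > t})"
      using sigsum[of "\<lambda>K. {e\<in>E - Fk K. c e > t}" x "\<lambda>_. 1"] finE by simp
    finally show "(\<Sum>j\<in>{j\<in>J. a j > t}. w j) \<ge> 0" using key[of t] by simp
  qed
  have "(\<Sum>j\<in>J. w j * a j) \<ge> 0" by (rule layer[OF finJ a0 cond])
  moreover have "(\<Sum>j\<in>J. w j * a j) = (\<Sum>p\<in>Sg. x (fst p) * c (snd p)) - sum c E"
    unfolding J_def using finSg finE unfolding w_def a_def by (simp add: sum.Plus comp_def sum_negf)
  moreover have "(\<Sum>p\<in>Sg. x (fst p) * c (snd p)) = (\<Sum>K\<in>H. x K * drop_T R ends E c K)"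
  proof -
    have "(\<Sum>p\<in>Sg. x (fst p) * c (snd p)) = (\<Sum>K\<in>H. x K * sum c (E - Fk K))"
      unfolding Sg_def using sigsum[of "\<lambda>K. E - Fk K" x c] finE by simp
    also have "\<dots> = (\<Sum>K\<in>H. x K * drop_T R ends E c K)"
      by (rule sum.cong) (simp_all add: drop_eq)
    finally show ?thesis .
  qed
  ultimately show ?thesis unfolding H_def by simp
qed

end
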